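(* Let $H=P_4$ (the path $1-2-3-4$) and let $G_1,G_2$ be graphs where $G_i$ is $d_i$-regular of order $n_i$ with adjacency eigenvalues $d_i=\lambda_1(A(G_i)),\dots,\lambda_{n_i}(A(G_i))$, $i=1,2$. Let $G=\bigvee_{P_4}\{G_1,G_2,G_2',G_1'\}$, where $G_1'$, $G_2'$ are disjoint copies of $G_1$, $G_2$ assigned to vertices $4$ and $3$ respectively, and let $s\in\mathbb{R}$. Set $$a(s)=s^2(d_1+n_2-1)-sd_1+1,\qquad b(s)=s^2(d_2+(n_1+n_2)-1)-sd_2+1,$$ $\sigma(M_1(s))=\{s^2(d_1+n_2-1)-s\lambda_k(A(G_1))+1\}_{k=1}^{n_1}$ and $\sigma(M_2(s))=\{s^2(d_2+n_1+n_2-1)-s\lambda_k(A(G_2))+1\}_{k=1}^{n_2}$. Then $$\sigma(M_G(s))=\big(\sigma(M_1(s))^{[2]}-\{a(s)^{[2]}\}\big)\cup\big(\sigma(M_2(s))^{[2]}-\{b(s)^{[2]}\}\big)\cup\sigma(F_4(s)),$$ where $X^{[2]}$ denotes the multiset $X$ with every multiplicity doubled, $\{a(s)^{[2]}\}$ denotes two copies of $a(s)$, and $$\sigma(F_4(s))=\Big\{\tfrac12\big(a(s)+b(s)+sn_2\pm\sqrt{(a(s)-b(s)-sn_2)^2+4s^2n_1n_2}\big),\ \tfrac12\big(a(s)+b(s)-sn_2\pm\sqrt{(a(s)-b(s)+sn_2)^2+4s^2n_1n_2}\big)\Big\}.$$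
   Context: For a simple undirected graph $G$ with adjacency matrix $A$, degree matrix $D$ and identity $I$, and real $s$, the deformed Laplacian matrix is $M_G(s)=I-sA+s^2(D-I)$; $\sigma(\cdot)$ is the multiset of eigenvalues. $H$-join: given a graph $H$ on vertex set $\{1,\dots,r\}$ and pairwise vertex-disjoint graphs $G_1,\dots,G_r$, $\bigvee_H\{G_i\}$ has vertex set $\bigcup_iV(G_i)$ and edges $\bigcup_iE(G_i)$ together with all edges $uv$, $u\in V(G_i)$, $v\in V(G_j)$, for each $ij\in E(H)$. *)

theory Defs
  imports Main "HOL-Combinatorics.Permutations" "HOL-Computational_Algebra.Polynomial"
    "HOL-Library.Multiset"
begin

definition simple_graph :: "'v set \<Rightarrow> ('v \<Rightarrow> 'v \<Rightarrow> bool) \<Rightarrow> bool" where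
  "simple_graph V E \<longleftrightarrow> finite V \<and> (\<forall>u v. E u v \<longrightarrow> u \<in> V \<and> v \<in> V)
     \<and> (\<forall>u v. E u v \<longrightarrow> E v u) \<and> (\<forall>v. \<not> E v v)"

definition degree :: "'v set \<Rightarrow> ('v \<Rightarrow> 'v \<Rightarrow> bool) \<Rightarrow> 'v \<Rightarrow> nat" where
  "degree V E v = card {u \<in> V. E v u}"

definition regular :: "'v set \<Rightarrow> ('v \<Rightarrow> 'v \<Rightarrow> bool) \<Rightarrow> nat \<Rightarrow> bool" where
  "regular V E d \<longleftrightarrow> (\<forall>v \<in> V. degree V E v = d)"

definition graph_iso :: "'v set \<Rightarrow> ('v \<Rightarrow> 'v \<Rightarrow> bool) \<Rightarrow> 'w set \<Rightarrow> ('w \<Rightarrow> 'w \<Rightarrow> bool) \<Rightarrow> bool" where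
  "graph_iso V E W F \<longleftrightarrow> (\<exists>f. bij_betw f V W \<and> (\<forall>u\<in>V. \<forall>v\<in>V. E u v \<longleftrightarrow> F (f u) (f v)))"

definition adj_matrix :: "('v \<Rightarrow> 'v \<Rightarrow> bool) \<Rightarrow> 'v \<Rightarrow> 'v \<Rightarrow> real" where
  "adj_matrix E u v = (if E u v then 1 else 0)"

definition deformed_laplacian :: "'v set \<Rightarrow> ('v \<Rightarrow> 'v \<Rightarrow> bool) \<Rightarrow> real \<Rightarrow> 'v \<Rightarrow> 'v \<Rightarrow> real" where
  "deformed_laplacian V E s u v =
     (if u = v then 1 else 0) - s * adj_matrix E u v
     + s^2 * (if u = v then real (degree V E u) - 1 else 0)"

definition det_on :: "'v set \<Rightarrow> ('v \<Rightarrow> 'v \<Rightarrow> 'a::comm_ring_1) \<Rightarrow> 'a" where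
  "det_on V M = (\<Sum>p | p permutes V. of_int (sign p) * (\<Prod>i\<in>V. M i (p i)))"

definition charpoly_on :: "'v set \<Rightarrow> ('v \<Rightarrow> 'v \<Rightarrow> real) \<Rightarrow> real poly" where
  "charpoly_on V M = det_on V (\<lambda>i j. (if i = j then [:0, 1:] else 0) - [:M i j:])"

text \<open>The multiset of eigenvalues (with algebraic multiplicity): the multiset of roots of
the characteristic polynomial, which splits for the real symmetric matrices considered.\<close>
definition spec_on :: "'v set \<Rightarrow> ('v \<Rightarrow> 'v \<Rightarrow> real) \<Rightarrow> real multiset" where
  "spec_on V M = (THE X. charpoly_on V M = (\<Prod>l\<in>#X. [:-l, 1:]))"

text \<open>H-join: H is a graph on {1..r} given by a symmetric relation on nat;
Gs i = (V_i, E_i) for i in {1..r}, pairwise vertex-disjoint.\<close>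
definition hjoin_V :: "nat \<Rightarrow> (nat \<Rightarrow> 'v set \<times> ('v \<Rightarrow> 'v \<Rightarrow> bool)) \<Rightarrow> 'v set" where
  "hjoin_V r Gs = (\<Union>i\<in>{1..r}. fst (Gs i))"

definition hjoin_E :: "nat \<Rightarrow> (nat \<Rightarrow> nat \<Rightarrow> bool) \<Rightarrow> (nat \<Rightarrow> 'v set \<times> ('v \<Rightarrow> 'v \<Rightarrow> bool))
     \<Rightarrow> 'v \<Rightarrow> 'v \<Rightarrow> bool" where
  "hjoin_E r H Gs u v \<longleftrightarrow> (\<exists>i\<in>{1..r}. snd (Gs i) u v)
     \<or> (\<exists>i\<in>{1..r}. \<exists>j\<in>{1..r}. H i j \<and> u \<in> fst (Gs i) \<and> v \<in> fst (Gs j))"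

definition P4 :: "nat \<Rightarrow> nat \<Rightarrow> bool" where
  "P4 i j \<longleftrightarrow> {i, j} \<in> {{1, 2}, {2, 3}, {3, 4}}"

end

theory Submission
  imports Defs "Jordan_Normal_Form.Char_Poly" "HOL-Computational_Algebra.Fundamental_Theorem_Algebra"
begin


lemma det_on_cong:
  assumes "\<And>i j. i \<in> V \<Longrightarrow> j \<in> V \<Longrightarrow> M i j = N i j"
  shows "det_on V M = det_on V N"
  unfolding det_on_def
proof (rule sum.cong[OF refl])
  fix p assume "p \<in> {p. p permutes V}"
  then have "\<And>i. i \<in> V \<Longrightarrow> p i \<in> V" using permutes_in_image[of p V] by auto
  then show "of_int (sign p) * (\<Prod>i\<in>V. M i (p i)) = of_int (sign p) * (\<Prod>i\<in>V. N i (p i))"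
    using assms by (auto intro!: prod.cong)
qed

lemma det_on_reindex:
  assumes g: "bij_betw g W V" and fin: "finite W"
  shows "det_on V M = det_on W (\<lambda>i j. M (g i) (g j))"
proof -
  let ?h = "map_permutation W g"
  have ginj: "inj_on g W" using g bij_betw_def by blast
  have bij: "bij_betw ?h {p. p permutes W} {p. p permutes V}"
  proof (rule bij_betwI[where g="map_permutation V (inv_into W g)"])
    show "?h \<in> {p. p permutes W} \<rightarrow> {p. p permutes V}" using map_permutation_permutes[OF g] by auto
    show "map_permutation V (inv_into W g) \<in> {p. p permutes V} \<rightarrow> {p. p permutes W}"
      using map_permutation_permutes[OF bij_betw_inv_into[OF g]] by auto
    fix p assume "p \<in> {p. p permutes W}"
    then show "map_permutation V (inv_into W g) (?h p) = p"
      by (intro map_permutation_compose_inv[OF g]) (auto simp: ginj)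
  next
    fix p assume "p \<in> {p. p permutes V}"
    then show "?h (map_permutation V (inv_into W g) p) = p"
      by (intro map_permutation_compose_inv[OF bij_betw_inv_into[OF g]])
         (use g in \<open>auto simp: bij_betw_inv_into_right\<close>)
  qed
  have "det_on V M = (\<Sum>q\<in>{p. p permutes W}. of_int (sign (?h q)) * (\<Prod>v\<in>V. M v (?h q v)))"
    unfolding det_on_def by (rule sum.reindex_bij_betw[OF bij, symmetric])
  also have "\<dots> = det_on W (\<lambda>i j. M (g i) (g j))"
    unfolding det_on_def
  proof (rule sum.cong[OF refl])
    fix q assume q: "q \<in> {p. p permutes W}"
    have s: "sign (?h q) = sign q" using sign_map_permutation[OF ginj _ fin] q by auto
    have "(\<Prod>v\<in>V. M v (?h q v)) = (\<Prod>i\<in>W. M (g i) (?h q (g i)))"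
      by (rule prod.reindex_bij_betw[OF g, symmetric])
    also have "\<dots> = (\<Prod>i\<in>W. M (g i) (g (q i)))"
      by (rule prod.cong[OF refl]) (simp add: map_permutation_apply[OF ginj])
    finally show "of_int (sign (?h q)) * (\<Prod>v\<in>V. M v (?h q v)) = of_int (sign q) * (\<Prod>i\<in>W. M (g i) (g (q i)))"
      using s by simp
  qed
  finally show ?thesis .
qed

lemma det_jnf: "det (mat n n f) = det_on {0..<n} (\<lambda>i j. f (i, j))"
  unfolding det_def det_on_def by (simp add: sign_def)



definition mm :: "'v set \<Rightarrow> ('v \<Rightarrow> 'v \<Rightarrow> 'a::comm_ring_1) \<Rightarrow> ('v \<Rightarrow> 'v \<Rightarrow> 'a) \<Rightarrow> 'v \<Rightarrow> 'v \<Rightarrow> 'a" where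
  "mm V A B u w = (\<Sum>k\<in>V. A u k * B k w)"

lemma det_on_as_jnf:
  assumes g: "bij_betw g {0..<n} V"
  shows "det_on V M = det (mat n n (\<lambda>(i,j). M (g i) (g j)))"
  by (simp add: det_jnf det_on_reindex[OF g])

lemma det_on_mult:
  fixes A B :: "'v \<Rightarrow> 'v \<Rightarrow> 'a::comm_ring_1"
  assumes fin: "finite V"
  shows "det_on V (mm V A B) = det_on V A * det_on V B"
proof -
  obtain g where g: "bij_betw g {0..<card V} V" using ex_bij_betw_nat_finite[OF fin] by blast
  let ?n = "card V"
  let ?J = "\<lambda>M. mat ?n ?n (\<lambda>(i,j). M (g i) (g j))"
  have "?J (mm V A B) = ?J A * ?J B"
  proof (rule eq_matI)
    fix i j assume ij: "i < dim_row (?J A * ?J B)" "j < dim_col (?J A * ?J B)"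
    then have i: "i < ?n" and j: "j < ?n" by auto
    have "(?J A * ?J B) $$ (i, j) = (\<Sum>k\<in>{0..<?n}. A (g i) (g k) * B (g k) (g j))"
      using i j by (simp add: scalar_prod_def)
    also have "\<dots> = (\<Sum>k\<in>V. A (g i) k * B k (g j))"
      by (rule sum.reindex_bij_betw[OF g])
    finally show "?J (mm V A B) $$ (i, j) = (?J A * ?J B) $$ (i, j)"
      using i j by (simp add: mm_def)
  qed auto
  then show ?thesis
    by (simp add: det_on_as_jnf[OF g] det_mult[of _ ?n])
qed

lemma det_on_pad:
  fixes M :: "'v \<Rightarrow> 'v \<Rightarrow> 'a::comm_ring_1"
  assumes fin: "finite V" and S: "S \<subseteq> V"
    and idr: "\<And>u w. u \<in> V - S \<Longrightarrow> w \<in> V \<Longrightarrow> M u w = (if u = w then 1 else 0)"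
  shows "det_on V M = det_on S M"
proof -
  let ?f = "\<lambda>p. of_int (sign p) * (\<Prod>i\<in>V. M i (p i)) :: 'a"
  have sub: "{p. p permutes S} \<subseteq> {p. p permutes V}" using permutes_subset S by blast
  have finV: "finite {p. p permutes V}" using finite_permutations[OF fin] by simp
  have "det_on V M = sum ?f {p. p permutes S}"
    unfolding det_on_def
  proof (rule sum.mono_neutral_right[OF finV sub], rule ballI)
    fix p assume p: "p \<in> {p. p permutes V} - {p. p permutes S}"
    then have pV: "p permutes V" and npS: "\<not> p permutes S" by auto
    have "\<exists>u. u \<notin> S \<and> p u \<noteq> u"
    proof (rule ccontr)
      assume "\<not> ?thesis"
      then have "\<forall>x. x \<notin> S \<longrightarrow> p x = x" by blast
      with pV have "p permutes S" unfolding permutes_def by blast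
      with npS show False by simp
    qed
    then obtain u where u: "u \<notin> S" "p u \<noteq> u" by blast
    have uV: "u \<in> V" using u pV permutes_not_in by metis
    have "p u \<in> V" using uV pV permutes_in_image by metis
    then have "M u (p u) = 0" using idr[of u "p u"] u uV by simp
    then have "\<exists>a\<in>V. M a (p a) = 0" using uV by blast
    then have "(\<Prod>i\<in>V. M i (p i)) = 0" by (rule prod_zero[OF fin])
    then show "?f p = 0" by simp
  qed
  also have "\<dots> = det_on S M"
    unfolding det_on_def
  proof (rule sum.cong[OF refl])
    fix p assume "p \<in> {p. p permutes S}"
    then have pS: "p permutes S" by simp
    have "(\<Prod>i\<in>V. M i (p i)) = (\<Prod>i\<in>V - S. M i (p i)) * (\<Prod>i\<in>S. M i (p i))"
      by (rule prod.subset_diff[OF S fin])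
    also have "(\<Prod>i\<in>V - S. M i (p i)) = 1"
      by (rule prod.neutral) (use idr pS permutes_not_in in fastforce)
    finally show "?f p = of_int (sign p) * (\<Prod>i\<in>S. M i (p i))" by simp
  qed
  finally show ?thesis .
qed

lemma det_on_empty: "det_on {} M = 1"
  unfolding det_on_def by simp

lemma det_on_id:
  fixes V :: "'v set"
  assumes "finite V"
  shows "det_on V (\<lambda>u w. if u = w then 1 else 0) = (1::'a::comm_ring_1)"
proof -
  have "det_on V (\<lambda>u w. if u = w then 1 else 0) = det_on ({}::'v set) (\<lambda>u w. if u = w then 1 else (0::'a))"
    by (rule det_on_pad) (use assms in auto)
  then show ?thesis by (simp add: det_on_empty)
qed

lemma det_on_scale:
  assumes "finite V"
  shows "det_on V (\<lambda>i j. k * M i j) = k ^ card V * det_on V M"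
  unfolding det_on_def prod.distrib prod_constant sum_distrib_left
  by (rule sum.cong) auto

lemma det_on_block:
  fixes C :: "'v \<Rightarrow> 'v \<Rightarrow> 'a::comm_ring_1"
  assumes fin: "finite V" and R: "R \<subseteq> V"
    and z: "\<And>u w. u \<in> V - R \<Longrightarrow> w \<in> R \<Longrightarrow> C u w = 0"
  shows "det_on V C = det_on R C * det_on (V - R) C"
proof -
  define L where "L = (\<lambda>u w. if u \<in> R then (if u = w then 1 else 0) else (if w \<in> R then 0 else C u w))"
  define U where "U = (\<lambda>u w. if u \<in> R then C u w else (if u = w then 1 else 0))"
  have LU: "mm V L U u w = C u w" if u: "u \<in> V" and w: "w \<in> V" for u w
  proof (cases "u \<in> R")
    case True
    have "mm V L U u w = (\<Sum>k\<in>V. if k = u then U k w else 0)"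
      unfolding mm_def L_def using True by (intro sum.cong) auto
    also have "\<dots> = C u w" using u True fin by (simp add: U_def)
    finally show ?thesis .
  next
    case False
    have "mm V L U u w = (\<Sum>k\<in>V. if k = w then (if w \<in> R then 0 else C u w) else 0)"
      unfolding mm_def L_def U_def using False by (intro sum.cong) auto
    also have "\<dots> = C u w" using w False fin z[of u w] u by auto
    finally show ?thesis .
  qed
  have "det_on V C = det_on V (mm V L U)" by (rule det_on_cong) (simp add: LU)
  also have "\<dots> = det_on V L * det_on V U" by (rule det_on_mult[OF fin])
  also have "det_on V L = det_on (V - R) L"
    by (rule det_on_pad[OF fin]) (auto simp: L_def)
  also have "\<dots> = det_on (V - R) C" by (rule det_on_cong) (auto simp: L_def)
  also have "det_on V U = det_on R U"
    by (rule det_on_pad[OF fin R]) (auto simp: U_def)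
  also have "\<dots> = det_on R C" by (rule det_on_cong) (auto simp: U_def)
  finally show ?thesis by (simp add: mult.commute)
qed



lemma det_on_equitable:
  fixes N :: "'v \<Rightarrow> 'v \<Rightarrow> 'a::comm_ring_1"
  assumes fin: "finite V" and R: "R \<subseteq> V"
    and rhoV: "\<And>v. v \<in> V \<Longrightarrow> \<rho> v \<in> R" and rhoR: "\<And>r. r \<in> R \<Longrightarrow> \<rho> r = r"
    and eq: "\<And>u r. u \<in> V \<Longrightarrow> r \<in> R \<Longrightarrow>
       (\<Sum>w\<in>{w\<in>V. \<rho> w = r}. N u w) = (\<Sum>w\<in>{w\<in>V. \<rho> w = r}. N (\<rho> u) w)"
  shows "det_on V N = det_on R (\<lambda>u r. \<Sum>w\<in>{w\<in>V. \<rho> w = r}. N u w)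
                      * det_on (V - R) (\<lambda>u w. N u w - N (\<rho> u) w)"
proof -
  define S where "S = (\<lambda>u r. \<Sum>w\<in>{w\<in>V. \<rho> w = r}. N u w)"
  define P where "P = (\<lambda>k w. if w \<in> R then (if \<rho> k = w then 1 else 0) else (if k = w then 1 else (0::'a)))"
  define Q where "Q = (\<lambda>u k. (if u = k then 1 else 0) - (if u \<notin> R \<and> k = \<rho> u then 1 else (0::'a)))"
  have NP: "mm V N P u w = (if w \<in> R then S u w else N u w)" if "u \<in> V" "w \<in> V" for u w
  proof (cases "w \<in> R")
    case True
    have "mm V N P u w = (\<Sum>k\<in>V. if \<rho> k = w then N u k else 0)"
      unfolding mm_def P_def using True by (intro sum.cong) auto
    also have "\<dots> = S u w" unfolding S_def by (simp add: sum.inter_filter[OF fin])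
    finally show ?thesis using True by simp
  next
    case False
    have "mm V N P u w = (\<Sum>k\<in>V. if k = w then N u w else 0)"
      unfolding mm_def P_def using False by (intro sum.cong) auto
    also have "\<dots> = N u w" using that fin by simp
    finally show ?thesis using False by simp
  qed
  define C where "C = mm V Q (mm V N P)"
  have Cf: "C u w = mm V N P u w - (if u \<notin> R then mm V N P (\<rho> u) w else 0)"
    if "u \<in> V" "w \<in> V" for u w
  proof -
    have "C u w = (\<Sum>k\<in>V. (if k = u then mm V N P k w else 0)
                   - (if u \<notin> R then (if k = \<rho> u then mm V N P k w else 0) else 0))"
      unfolding C_def by (subst mm_def, intro sum.cong) (auto simp: Q_def left_diff_distrib)
    also have "\<dots> = mm V N P u w - (if u \<notin> R then mm V N P (\<rho> u) w else 0)"
      using that fin rhoV[OF that(1)] R by (auto simp: sum_subtractf)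
    finally show ?thesis .
  qed
  have dP: "det_on V P = 1"
  proof -
    have "det_on V P = det_on (V - R) P"
      by (rule det_on_pad[OF fin]) (use R rhoR in \<open>auto simp: P_def\<close>)
    also have "\<dots> = det_on (V - R) (\<lambda>u w. if u = w then 1 else 0)"
      by (rule det_on_cong) (auto simp: P_def)
    also have "\<dots> = 1" using fin by (simp add: det_on_id)
    finally show ?thesis .
  qed
  have dQ: "det_on V Q = 1"
  proof -
    have "det_on V Q = det_on (V - R) Q"
      by (rule det_on_pad[OF fin]) (use R in \<open>auto simp: Q_def\<close>)
    also have "\<dots> = det_on (V - R) (\<lambda>u w. if u = w then 1 else 0)"
      by (rule det_on_cong) (use rhoV in \<open>auto simp: Q_def\<close>)
    also have "\<dots> = 1" using fin by (simp add: det_on_id)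
    finally show ?thesis .
  qed
  have "det_on V C = det_on V N"
    unfolding C_def by (simp add: det_on_mult[OF fin] dP dQ)
  moreover have "det_on V C = det_on R C * det_on (V - R) C"
  proof (rule det_on_block[OF fin R])
    fix u w assume u: "u \<in> V - R" and w: "w \<in> R"
    have "\<rho> u \<in> V" using rhoV u R by auto
    then show "C u w = 0" using u w R Cf[of u w] NP[of u w] NP[of "\<rho> u" w] eq[of u w]
      by (auto simp: S_def)
  qed
  moreover have "det_on R C = det_on R S"
  proof (rule det_on_cong)
    fix u w assume "u \<in> R" "w \<in> R"
    then show "C u w = S u w" using R Cf[of u w] NP[of u w] by auto
  qed
  moreover have "det_on (V - R) C = det_on (V - R) (\<lambda>u w. N u w - N (\<rho> u) w)"
  proof (rule det_on_cong)
    fix u w assume u: "u \<in> V - R" and w: "w \<in> V - R"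
    have "\<rho> u \<in> V" using rhoV u R by auto
    then show "C u w = N u w - N (\<rho> u) w" using u w Cf[of u w] NP[of u w] NP[of "\<rho> u" w] by auto
  qed
  ultimately show ?thesis by (simp add: S_def)
qed



lemma herm_real_eig:
  fixes B :: "real mat" and a :: complex
  assumes B: "B \<in> carrier_mat n n" and sym: "\<And>i j. i < n \<Longrightarrow> j < n \<Longrightarrow> B $$ (i,j) = B $$ (j,i)"
    and ev: "eigenvalue (map_mat complex_of_real B) a"
  shows "Im a = 0"
proof -
  from ev obtain v where v: "v \<in> carrier_vec n" "v \<noteq> 0\<^sub>v n" "map_mat complex_of_real B *\<^sub>v v = a \<cdot>\<^sub>v v"
    unfolding eigenvalue_def eigenvector_def using B by auto
  have comp: "(\<Sum>j=0..<n. of_real (B $$ (i,j)) * v $ j) = a * v $ i" if i: "i < n" for i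
  proof -
    have "(map_mat complex_of_real B *\<^sub>v v) $ i = (a \<cdot>\<^sub>v v) $ i" by (simp only: v(3))
    moreover have "(map_mat complex_of_real B *\<^sub>v v) $ i = (\<Sum>j=0..<n. of_real (B $$ (i,j)) * v $ j)"
      using i B v(1) by (simp add: scalar_prod_def mult.commute)
    moreover have "(a \<cdot>\<^sub>v v) $ i = a * v $ i" using i v(1) by simp
    ultimately show ?thesis by simp
  qed
  define f where "f = (\<lambda>i j. of_real (B $$ (i,j)) * cnj (v $ i) * v $ j)"
  define T where "T = (\<Sum>i=0..<n. \<Sum>j=0..<n. f i j)"
  define K where "K = (\<Sum>i=0..<n. (Re (v $ i))\<^sup>2 + (Im (v $ i))\<^sup>2)"
  have T1: "T = a * of_real K"
  proof -
    have "T = (\<Sum>i=0..<n. cnj (v $ i) * (\<Sum>j=0..<n. of_real (B $$ (i,j)) * v $ j))"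
      unfolding T_def f_def by (simp add: sum_distrib_left ac_simps)
    also have "\<dots> = (\<Sum>i=0..<n. a * (v $ i * cnj (v $ i)))"
    proof (rule sum.cong[OF refl])
      fix i assume "i \<in> {0..<n}"
      then have "(\<Sum>j=0..<n. of_real (B $$ (i,j)) * v $ j) = a * v $ i" using comp by simp
      then show "cnj (v $ i) * (\<Sum>j=0..<n. of_real (B $$ (i,j)) * v $ j) = a * (v $ i * cnj (v $ i))"
        by (simp only: ac_simps)
    qed
    also have "\<dots> = a * of_real K"
      unfolding K_def complex_mult_cnj by (simp add: sum_distrib_left)
    finally show ?thesis .
  qed
  have T2: "cnj T = T"
  proof -
    have "cnj T = (\<Sum>i=0..<n. \<Sum>j=0..<n. f j i)"
      unfolding T_def f_def by (simp add: sym ac_simps)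
    also have "\<dots> = T" unfolding T_def by (rule sum.swap)
    finally show ?thesis .
  qed
  have K: "K > 0"
  proof -
    obtain i where i: "i < n" "v $ i \<noteq> 0"
      using v(1,2) by (metis carrier_vecD eq_vecI index_zero_vec(1) index_zero_vec(2))
    have pos: "(Re (v $ i))\<^sup>2 + (Im (v $ i))\<^sup>2 > 0"
      using i(2) by (simp add: complex_eq_iff sum_power2_gt_zero_iff)
    have "(Re (v $ i))\<^sup>2 + (Im (v $ i))\<^sup>2 \<le> K"
      unfolding K_def by (rule member_le_sum) (use i in auto)
    with pos show ?thesis by linarith
  qed
  have "Im T = 0" using T2 by (simp add: complex_eq_iff)
  then have "Im a * K = 0" using T1 by simp
  then show ?thesis using K by simp
qed

lemma prod_of_real_roots:
  assumes "\<forall>a\<in>set as. Im a = 0"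
  shows "(\<Prod>a\<leftarrow>as. complex_of_real x - a) = of_real (\<Prod>a\<leftarrow>as. x - Re a)"
  using assms by (induction as) (auto simp: complex_eq_iff)

lemma sym_real_splits:
  fixes B :: "real mat"
  assumes B: "B \<in> carrier_mat n n" and sym: "\<And>i j. i < n \<Longrightarrow> j < n \<Longrightarrow> B $$ (i,j) = B $$ (j,i)"
  shows "\<exists>es. char_poly B = (\<Prod>e\<leftarrow>es. [:-e,1:])"
proof -
  let ?C = "map_mat complex_of_real B"
  have C: "?C \<in> carrier_mat n n" using B by simp
  have cp: "char_poly ?C = map_poly of_real (char_poly B)" using of_real_hom.char_poly_hom[OF B] by simp
  obtain as where as: "Polynomial.smult (lead_coeff (char_poly ?C)) (\<Prod>a\<leftarrow>as. [:-a,1:]) = char_poly ?C"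
    using fundamental_theorem_algebra_factorized by blast
  have lc: "lead_coeff (char_poly ?C) = 1" using degree_monic_char_poly[OF C] by simp
  then have asC: "char_poly ?C = (\<Prod>a\<leftarrow>as. [:-a,1:])" using as by simp
  have real: "\<forall>a\<in>set as. Im a = 0"
  proof
    fix a assume "a \<in> set as"
    then have "poly (char_poly ?C) a = 0" unfolding asC by (rule linear_poly_root)
    then have ev: "eigenvalue ?C a" using eigenvalue_root_char_poly[OF C] by simp
    note h = herm_real_eig[OF B sym, of a]
    show "Im a = 0" using h ev by simp
  qed
  define es where "es = map Re as"
  have "poly (char_poly B) = poly (\<Prod>e\<leftarrow>es. [:-e,1:])"
  proof
    fix x
    have "complex_of_real (poly (char_poly B) x) = poly (char_poly ?C) (of_real x)"
      using cp by simp
    also have "\<dots> = (\<Prod>a\<leftarrow>as. complex_of_real x - a)"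
      unfolding asC poly_prod_list by (simp add: o_def)
    also have "\<dots> = of_real (\<Prod>a\<leftarrow>as. x - Re a)" by (rule prod_of_real_roots[OF real])
    also have "(\<Prod>a\<leftarrow>as. x - Re a) = poly (\<Prod>e\<leftarrow>es. [:-e,1:]) x"
      unfolding es_def poly_prod_list by (simp add: o_def)
    finally show "poly (char_poly B) x = poly (\<Prod>e\<leftarrow>es. [:-e,1:]) x" by (simp only: of_real_eq_iff)
  qed
  then show ?thesis using poly_eq_poly_eq_iff by blast
qed

lemma linfac_root:
  fixes Y :: "'a::idom multiset"
  shows "poly (\<Prod>l\<in>#Y. [:-l,1:]) x = 0 \<longleftrightarrow> x \<in># Y"
  by (auto simp: poly_prod_mset prod_mset_zero_iff image_iff)

lemma linfac_inj:
  fixes X Y :: "'a::idom multiset"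
  assumes "(\<Prod>l\<in>#X. [:-l,1:]) = (\<Prod>l\<in>#Y. [:-l,1:])"
  shows "X = Y"
  using assms
proof (induction X arbitrary: Y)
  case empty
  show ?case
  proof (rule ccontr)
    assume "{#} \<noteq> Y"
    then obtain y where "y \<in># Y" by (metis multiset_nonemptyE)
    then have "poly (\<Prod>l\<in>#Y. [:-l,1:]) y = 0" by (simp add: linfac_root)
    then show False using empty by simp
  qed
next
  case (add x X)
  have "poly (\<Prod>l\<in>#Y. [:-l,1:]) x = 0" using add.prems[symmetric] by (simp add: linfac_root)
  then have xY: "x \<in># Y" by (simp add: linfac_root)
  then have Y: "Y = add_mset x (Y - {#x#})" by simp
  have "[:-x,1:] * (\<Prod>l\<in>#X. [:-l,1:]) = [:-x,1:] * (\<Prod>l\<in>#Y - {#x#}. [:-l,1:])"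
    using add.prems by (subst (asm) Y) simp
  moreover have nz: "[:-x,1:] \<noteq> 0" by simp
  ultimately have "(\<Prod>l\<in>#X. [:-l,1:]) = (\<Prod>l\<in>#Y - {#x#}. [:-l,1:])"
    by (simp only: mult_left_cancel[OF nz])
  then have "X = Y - {#x#}" by (rule add.IH)
  then show ?case using Y by simp
qed

lemma spec_on_eq:
  assumes "charpoly_on V M = (\<Prod>l\<in>#X. [:-l,1:])"
  shows "spec_on V M = X"
  unfolding spec_on_def by (rule the_equality) (use assms linfac_inj in auto)

lemma charpoly_on_jnf:
  assumes g: "bij_betw g {0..<n} V"
  shows "charpoly_on V A = char_poly (mat n n (\<lambda>(i,j). A (g i) (g j)))"
proof -
  have inj: "g i = g j \<longleftrightarrow> i = j" if "i < n" "j < n" for i j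
    using g that unfolding bij_betw_def inj_on_def by auto
  show ?thesis
    unfolding charpoly_on_def char_poly_def char_poly_matrix_def det_on_as_jnf[OF g]
    by (rule arg_cong[where f=det], rule eq_matI) (auto simp: inj)
qed

lemma sym_splits_on:
  fixes A :: "'v \<Rightarrow> 'v \<Rightarrow> real"
  assumes fin: "finite V" and sym: "\<And>i j. i \<in> V \<Longrightarrow> j \<in> V \<Longrightarrow> A i j = A j i"
  shows "charpoly_on V A = (\<Prod>l\<in>#spec_on V A. [:-l,1:])" "size (spec_on V A) = card V"
proof -
  obtain g where g: "bij_betw g {0..<card V} V" using ex_bij_betw_nat_finite[OF fin] by blast
  define B where "B = mat (card V) (card V) (\<lambda>(i,j). A (g i) (g j))"
  have Bc: "B \<in> carrier_mat (card V) (card V)" unfolding B_def by simp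
  have gV: "i < card V \<Longrightarrow> g i \<in> V" for i using g bij_betwE by fastforce
  have Bs: "B $$ (i,j) = B $$ (j,i)" if "i < card V" "j < card V" for i j
    using that gV sym unfolding B_def by simp
  obtain es where es: "char_poly B = (\<Prod>e\<leftarrow>es. [:-e,1:])" using sym_real_splits[OF Bc Bs] by blast
  have cp: "charpoly_on V A = (\<Prod>l\<in>#mset es. [:-l,1:])"
    using charpoly_on_jnf[OF g, of A] es unfolding B_def
    by (simp add: prod_mset_prod_list flip: mset_map)
  have sp: "spec_on V A = mset es" by (rule spec_on_eq[OF cp])
  show "charpoly_on V A = (\<Prod>l\<in>#spec_on V A. [:-l,1:])" using cp sp by simp
  have "Polynomial.degree (char_poly B) = card V" using degree_monic_char_poly[OF Bc] by simp
  then have "length es = card V" using es degree_linear_factors[of "\<lambda>e. -e" es] by simp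
  then show "size (spec_on V A) = card V" using sp by simp
qed



definition ch :: "'v set \<Rightarrow> ('v \<Rightarrow> 'v \<Rightarrow> real) \<Rightarrow> real \<Rightarrow> real" where
  "ch V M x = det_on V (\<lambda>i j. (if i = j then x else 0) - M i j)"

lemma poly_charpoly_on: "poly (charpoly_on V M) x = ch V M x"
  unfolding charpoly_on_def det_on_def ch_def poly_sum poly_mult poly_prod poly_of_int
  by (intro sum.cong refl arg_cong2[where f="(*)"] prod.cong) auto

lemma prod_mset_cmult: "(\<Prod>l\<in>#X. k * f l) = k ^ size X * (\<Prod>l\<in>#X. f l)"
  by (induction X) (auto simp: algebra_simps)

lemma prod_mset_const: "(\<Prod>l\<in>#X. k) = k ^ size X"
  by (induction X) auto

lemma ch_split:
  assumes fin: "finite V" and sym: "\<And>i j. i \<in> V \<Longrightarrow> j \<in> V \<Longrightarrow> A i j = A j i"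
  shows "ch V A x = (\<Prod>l\<in>#spec_on V A. x - l)"
  using sym_splits_on(1)[OF fin sym] poly_charpoly_on[of V A x]
  by (simp add: poly_prod_mset)

lemma ch_shift:
  fixes A :: "'v \<Rightarrow> 'v \<Rightarrow> real"
  assumes fin: "finite V" and sym: "\<And>i j. i \<in> V \<Longrightarrow> j \<in> V \<Longrightarrow> A i j = A j i"
  shows "ch V (\<lambda>i j. (if i = j then c else 0) - s * A i j) x = (\<Prod>l\<in>#spec_on V A. x - (c - s * l))"
proof (cases "s = 0")
  case True
  have "ch V (\<lambda>i j. (if i = j then c else 0) - s * A i j) x
      = det_on V (\<lambda>i j. (x - c) * (if i = j then 1 else 0))"
    unfolding ch_def using True by (intro det_on_cong) auto
  also have "\<dots> = (x - c) ^ card V" by (simp add: det_on_scale[OF fin] det_on_id[OF fin])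
  also have "\<dots> = (\<Prod>l\<in>#spec_on V A. x - (c - s * l))"
    using True sym_splits_on(2)[OF fin sym] by (simp add: prod_mset_const)
  finally show ?thesis .
next
  case False
  define y where "y = (c - x) / s"
  have "ch V (\<lambda>i j. (if i = j then c else 0) - s * A i j) x
      = det_on V (\<lambda>i j. (- s) * ((if i = j then y else 0) - A i j))"
    unfolding ch_def y_def using False by (intro det_on_cong) (auto simp: field_simps)
  also have "\<dots> = (- s) ^ card V * ch V A y" unfolding ch_def by (rule det_on_scale[OF fin])
  also have "\<dots> = (- s) ^ size (spec_on V A) * (\<Prod>l\<in>#spec_on V A. y - l)"
    using ch_split[OF fin sym, where x=y] sym_splits_on(2)[OF fin sym] by simp
  also have "\<dots> = (\<Prod>l\<in>#spec_on V A. (- s) * (y - l))" by (rule prod_mset_cmult[symmetric])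
  also have "\<dots> = (\<Prod>l\<in>#spec_on V A. x - (c - s * l))"
    unfolding y_def using False by (intro arg_cong[where f=prod_mset] image_mset_cong) (auto simp: field_simps)
  finally show ?thesis .
qed

lemma det_on_single: "det_on {r} M = M r r"
  unfolding det_on_def by simp

lemma det_on_two:
  fixes M :: "'v \<Rightarrow> 'v \<Rightarrow> 'a::comm_ring_1"
  assumes "p \<noteq> q"
  shows "det_on {p, q} M = M p p * M q q - M p q * M q p"
proof -
  have P: "{f. f permutes {p, q}} = {id, Transposition.transpose p q}"
    by (auto simp: permutes_doubleton_iff)
  have ne: "id \<noteq> Transposition.transpose p q"
  proof
    assume "id = Transposition.transpose p q"
    then have "id p = Transposition.transpose p q p" by simp
    then show False using assms by simp
  qed
  have s1: "(\<Prod>i\<in>{p, q}. M i (id i)) = M p p * M q q" using assms by simp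
  have s2: "(\<Prod>i\<in>{p, q}. M i (Transposition.transpose p q i)) = M p q * M q p" using assms by simp
  have "det_on {p, q} M = of_int (sign (id::'v\<Rightarrow>'v)) * (\<Prod>i\<in>{p, q}. M i (id i))
      + of_int (sign (Transposition.transpose p q)) * (\<Prod>i\<in>{p, q}. M i (Transposition.transpose p q i))"
    unfolding det_on_def P using ne by (subst sum.insert) auto
  then show ?thesis using assms by (simp add: s1 s2 sign_swap_id)
qed

lemma part_det:
  fixes N :: "'v \<Rightarrow> 'v \<Rightarrow> 'a::comm_ring_1"
  assumes fin: "finite W" and r: "r \<in> W" and rows: "\<And>u. u \<in> W \<Longrightarrow> (\<Sum>w\<in>W. N u w) = \<beta>"
  shows "det_on W N = \<beta> * det_on (W - {r}) (\<lambda>u w. N u w - N r w)"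
proof -
  have e: "{w \<in> W. (\<lambda>_. r) w = r} = W" by simp
  have "det_on W N = det_on {r} (\<lambda>u r'. \<Sum>w\<in>{w\<in>W. (\<lambda>_. r) w = r'}. N u w)
          * det_on (W - {r}) (\<lambda>u w. N u w - N ((\<lambda>_. r) u) w)"
    by (rule det_on_equitable[OF fin]) (use r rows in auto)
  then show ?thesis using rows[OF r] by (simp add: det_on_single)
qed



lemma sum_adj:
  assumes "finite W"
  shows "(\<Sum>w\<in>W. adj_matrix E u w) = real (card {w\<in>W. E u w})"
proof -
  have "(\<Sum>w\<in>W. adj_matrix E u w) = (\<Sum>w\<in>{w\<in>W. E u w}. 1)"
    unfolding adj_matrix_def using assms by (simp add: sum.inter_filter[symmetric])
  then show ?thesis by simp
qed

lemma iso_regular: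
  assumes iso: "graph_iso V E W F" and reg: "regular V E d"
  shows "regular W F d"
proof -
  obtain f where f: "bij_betw f V W" and fe: "\<forall>u\<in>V. \<forall>v\<in>V. E u v \<longleftrightarrow> F (f u) (f v)"
    using iso unfolding graph_iso_def by blast
  show ?thesis unfolding regular_def
  proof
    fix w assume w: "w \<in> W"
    have "w \<in> f ` V" using w bij_betw_imp_surj_on[OF f] by simp
    then obtain u where u: "u \<in> V" "w = f u" by blast
    have "{y\<in>W. F w y} = f ` {v\<in>V. E u v}"
    proof
      show "{y\<in>W. F w y} \<subseteq> f ` {v\<in>V. E u v}"
      proof
        fix y assume y: "y \<in> {y\<in>W. F w y}"
        have "y \<in> f ` V" using y bij_betw_imp_surj_on[OF f] by simp
        then obtain v where v: "v \<in> V" "y = f v" by blast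
        then show "y \<in> f ` {v\<in>V. E u v}" using y u fe by auto
      qed
      show "f ` {v\<in>V. E u v} \<subseteq> {y\<in>W. F w y}" using u fe bij_betwE[OF f] by auto
    qed
    moreover have "inj_on f {v\<in>V. E u v}" using bij_betw_imp_inj_on[OF f] by (rule inj_on_subset) auto
    ultimately have "card {y\<in>W. F w y} = card {v\<in>V. E u v}" by (simp add: card_image)
    then show "degree W F w = d" using reg u unfolding regular_def degree_def by simp
  qed
qed

lemma iso_ch:
  assumes iso: "graph_iso V E W F" and fin: "finite V"
  shows "ch W (\<lambda>u w. (if u = w then c else 0) - s * adj_matrix F u w) x
       = ch V (\<lambda>u w. (if u = w then c else 0) - s * adj_matrix E u w) x"
proof -
  obtain f where f: "bij_betw f V W" and fe: "\<forall>u\<in>V. \<forall>v\<in>V. E u v \<longleftrightarrow> F (f u) (f v)"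
    using iso unfolding graph_iso_def by blast
  have inj: "f u = f v \<longleftrightarrow> u = v" if "u \<in> V" "v \<in> V" for u v
    using f that unfolding bij_betw_def inj_on_def by auto
  show ?thesis unfolding ch_def
    by (subst det_on_reindex[OF f fin], rule det_on_cong) (use inj fe in \<open>auto simp: adj_matrix_def\<close>)
qed

lemma P4_iff: "P4 i j \<longleftrightarrow> (i = 1 \<and> j = 2) \<or> (i = 2 \<and> j = 1) \<or> (i = 2 \<and> j = 3) \<or> (i = 3 \<and> j = 2)
   \<or> (i = 3 \<and> j = 4) \<or> (i = 4 \<and> j = 3)"
  unfolding P4_def by (auto simp: doubleton_eq_iff)

lemma hjoin_E_char:
  assumes "Gs = (\<lambda>i::nat. if i = 1 then (V1, E1) else if i = 2 then (V2, E2)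
                         else if i = 3 then (V3, E3) else (V4, E4))"
  shows "hjoin_E 4 P4 Gs u w \<longleftrightarrow> E1 u w \<or> E2 u w \<or> E3 u w \<or> E4 u w
     \<or> (u \<in> V1 \<and> w \<in> V2) \<or> (u \<in> V2 \<and> w \<in> V1) \<or> (u \<in> V2 \<and> w \<in> V3)
     \<or> (u \<in> V3 \<and> w \<in> V2) \<or> (u \<in> V3 \<and> w \<in> V4) \<or> (u \<in> V4 \<and> w \<in> V3)"
proof -
  have r: "{1..4::nat} = {1,2,3,4}" by auto
  show ?thesis unfolding hjoin_E_def r assms by (auto simp: P4_iff)
qed

lemma hjoin_V_char:
  assumes "Gs = (\<lambda>i::nat. if i = 1 then (V1, E1) else if i = 2 then (V2, E2)
                         else if i = 3 then (V3, E3) else (V4, E4))"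
  shows "hjoin_V 4 Gs = V1 \<union> V2 \<union> V3 \<union> V4"
proof -
  have r: "{1..4::nat} = {1,2,3,4}" by auto
  show ?thesis unfolding hjoin_V_def r assms by auto
qed

lemma quad_roots:
  assumes "D \<ge> 0"
  shows "(x - (A + sqrt D) / 2) * (x - (A - sqrt D) / 2) = x^2 - A * x + (A^2 - D) / 4"
proof -
  have "sqrt D ^ 2 = D" using assms by simp
  then show ?thesis by (simp add: field_simps power2_eq_square)
qed



lemma sum_const_on:
  assumes "\<And>w. w \<in> W \<Longrightarrow> f w = k"
  shows "(\<Sum>w\<in>W. f w) = k * real (card W)"
  using assms by (simp add: sum.cong[of W W f "\<lambda>_. k"])

lemma main_core:
  fixes V1 V2 V3 V4 :: "'v set"
    and E1 E2 E3 E4 :: "'v \<Rightarrow> 'v \<Rightarrow> bool"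
    and d1 d2 :: nat and s :: real
  assumes g1: "simple_graph V1 E1" and g2: "simple_graph V2 E2"
    and g3: "simple_graph V3 E3" and g4: "simple_graph V4 E4"
    and ne1: "V1 \<noteq> {}" and ne2: "V2 \<noteq> {}"
    and reg1: "regular V1 E1 d1" and reg2: "regular V2 E2 d2"
    and copy3: "graph_iso V2 E2 V3 E3" and copy4: "graph_iso V1 E1 V4 E4"
    and disj: "V1 \<inter> V2 = {}" "V1 \<inter> V3 = {}" "V1 \<inter> V4 = {}"
      "V2 \<inter> V3 = {}" "V2 \<inter> V4 = {}" "V3 \<inter> V4 = {}"
    and Gs: "Gs = (\<lambda>i::nat. if i = 1 then (V1, E1) else if i = 2 then (V2, E2)
                         else if i = 3 then (V3, E3) else (V4, E4))"
    and Vdef: "V = hjoin_V 4 Gs" and Edef: "E = hjoin_E 4 P4 Gs"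
    and n1: "n1 = real (card V1)" and n2: "n2 = real (card V2)"
    and adef: "a = s^2 * (real d1 + n2 - 1) - s * real d1 + 1"
    and bdef: "b = s^2 * (real d2 + (n1 + n2) - 1) - s * real d2 + 1"
    and sM1: "\<sigma>M1 = image_mset (\<lambda>l. s^2 * (real d1 + n2 - 1) - s * l + 1)
                  (spec_on V1 (adj_matrix E1))"
    and sM2: "\<sigma>M2 = image_mset (\<lambda>l. s^2 * (real d2 + n1 + n2 - 1) - s * l + 1)
                  (spec_on V2 (adj_matrix E2))"
    and sF4: "\<sigma>F4 = {# (a + b + s * n2 + sqrt ((a - b - s * n2)^2 + 4 * s^2 * n1 * n2)) / 2,
                  (a + b + s * n2 - sqrt ((a - b - s * n2)^2 + 4 * s^2 * n1 * n2)) / 2,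
                  (a + b - s * n2 + sqrt ((a - b + s * n2)^2 + 4 * s^2 * n1 * n2)) / 2,
                  (a + b - s * n2 - sqrt ((a - b + s * n2)^2 + 4 * s^2 * n1 * n2)) / 2 #}"
  shows "spec_on V (deformed_laplacian V E s)
          = ((\<sigma>M1 + \<sigma>M1) - {#a, a#}) + ((\<sigma>M2 + \<sigma>M2) - {#b, b#}) + \<sigma>F4"
proof -
  note sg = simple_graph_def
  have fin1: "finite V1" and fin2: "finite V2" and fin3: "finite V3" and fin4: "finite V4"
    using g1 g2 g3 g4 by (auto simp: sg)
  have sup1: "\<And>u v. E1 u v \<Longrightarrow> u \<in> V1 \<and> v \<in> V1" using g1 by (auto simp: sg)
  have sup2: "\<And>u v. E2 u v \<Longrightarrow> u \<in> V2 \<and> v \<in> V2" using g2 by (auto simp: sg)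
  have sup3: "\<And>u v. E3 u v \<Longrightarrow> u \<in> V3 \<and> v \<in> V3" using g3 by (auto simp: sg)
  have sup4: "\<And>u v. E4 u v \<Longrightarrow> u \<in> V4 \<and> v \<in> V4" using g4 by (auto simp: sg)
  have sym1: "\<And>u v. adj_matrix E1 u v = adj_matrix E1 v u" using g1 by (auto simp: sg adj_matrix_def)
  have sym2: "\<And>u v. adj_matrix E2 u v = adj_matrix E2 v u" using g2 by (auto simp: sg adj_matrix_def)
  have reg3: "regular V3 E3 d2" by (rule iso_regular[OF copy3 reg2])
  have reg4: "regular V4 E4 d1" by (rule iso_regular[OF copy4 reg1])
  have card3: "card V3 = card V2" using copy3 unfolding graph_iso_def by (metis bij_betw_same_card)
  have card4: "card V4 = card V1" using copy4 unfolding graph_iso_def by (metis bij_betw_same_card)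
  have ne3: "V3 \<noteq> {}" using card3 ne2 fin2 fin3 by auto
  have ne4: "V4 \<noteq> {}" using card4 ne1 fin1 fin4 by auto
  have VU: "V = V1 \<union> V2 \<union> V3 \<union> V4" using hjoin_V_char[OF Gs] Vdef by simp
  have finV: "finite V" using VU fin1 fin2 fin3 fin4 by simp
  have Ec: "E u w \<longleftrightarrow> E1 u w \<or> E2 u w \<or> E3 u w \<or> E4 u w
     \<or> (u \<in> V1 \<and> w \<in> V2) \<or> (u \<in> V2 \<and> w \<in> V1) \<or> (u \<in> V2 \<and> w \<in> V3)
     \<or> (u \<in> V3 \<and> w \<in> V2) \<or> (u \<in> V3 \<and> w \<in> V4) \<or> (u \<in> V4 \<and> w \<in> V3)" for u w
    using hjoin_E_char[OF Gs] Edef by simp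
  have d: "\<And>x. x \<in> V1 \<Longrightarrow> x \<notin> V2" "\<And>x. x \<in> V1 \<Longrightarrow> x \<notin> V3" "\<And>x. x \<in> V1 \<Longrightarrow> x \<notin> V4"
    "\<And>x. x \<in> V2 \<Longrightarrow> x \<notin> V3" "\<And>x. x \<in> V2 \<Longrightarrow> x \<notin> V4" "\<And>x. x \<in> V3 \<Longrightarrow> x \<notin> V4"
    using disj by blast+
  have E_1: "E u w \<longleftrightarrow> (w \<in> V1 \<and> E1 u w) \<or> w \<in> V2" if "u \<in> V1" for u w
    using that Ec[of u w] sup1[of u w] sup2[of u w] sup3[of u w] sup4[of u w] d by blast
  have E_2: "E u w \<longleftrightarrow> (w \<in> V2 \<and> E2 u w) \<or> w \<in> V1 \<or> w \<in> V3" if "u \<in> V2" for u w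
    using that Ec[of u w] sup1[of u w] sup2[of u w] sup3[of u w] sup4[of u w] d by blast
  have E_3: "E u w \<longleftrightarrow> (w \<in> V3 \<and> E3 u w) \<or> w \<in> V2 \<or> w \<in> V4" if "u \<in> V3" for u w
    using that Ec[of u w] sup1[of u w] sup2[of u w] sup3[of u w] sup4[of u w] d by blast
  have E_4: "E u w \<longleftrightarrow> (w \<in> V4 \<and> E4 u w) \<or> w \<in> V3" if "u \<in> V4" for u w
    using that Ec[of u w] sup1[of u w] sup2[of u w] sup3[of u w] sup4[of u w] d by blast
  have dg1: "card {w\<in>V1. E1 u w} = d1" if "u \<in> V1" for u
    using reg1 that unfolding regular_def degree_def by simp
  have dg2: "card {w\<in>V2. E2 u w} = d2" if "u \<in> V2" for u
    using reg2 that unfolding regular_def degree_def by simp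
  have dg3: "card {w\<in>V3. E3 u w} = d2" if "u \<in> V3" for u
    using reg3 that unfolding regular_def degree_def by simp
  have dg4: "card {w\<in>V4. E4 u w} = d1" if "u \<in> V4" for u
    using reg4 that unfolding regular_def degree_def by simp
  have deg1: "degree V E u = d1 + card V2" if u: "u \<in> V1" for u
  proof -
    have "{w\<in>V. E u w} = {w\<in>V1. E1 u w} \<union> V2" using E_1[OF u] VU by auto
    moreover have "{w\<in>V1. E1 u w} \<inter> V2 = {}" using d by blast
    ultimately show ?thesis unfolding degree_def using fin1 fin2 dg1[OF u] by (simp add: card_Un_disjoint)
  qed
  have deg2: "degree V E u = d2 + card V1 + card V3" if u: "u \<in> V2" for u
  proof -
    have "{w\<in>V. E u w} = ({w\<in>V2. E2 u w} \<union> V1) \<union> V3" using E_2[OF u] VU by auto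
    moreover have "{w\<in>V2. E2 u w} \<inter> V1 = {}" "({w\<in>V2. E2 u w} \<union> V1) \<inter> V3 = {}" using d by blast+
    ultimately show ?thesis unfolding degree_def using fin1 fin2 fin3 dg2[OF u] by (simp add: card_Un_disjoint)
  qed
  have deg3: "degree V E u = d2 + card V2 + card V4" if u: "u \<in> V3" for u
  proof -
    have "{w\<in>V. E u w} = ({w\<in>V3. E3 u w} \<union> V2) \<union> V4" using E_3[OF u] VU by auto
    moreover have "{w\<in>V3. E3 u w} \<inter> V2 = {}" "({w\<in>V3. E3 u w} \<union> V2) \<inter> V4 = {}" using d by blast+
    ultimately show ?thesis unfolding degree_def using fin4 fin2 fin3 dg3[OF u] by (simp add: card_Un_disjoint)
  qed
  have deg4: "degree V E u = d1 + card V3" if u: "u \<in> V4" for u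
  proof -
    have "{w\<in>V. E u w} = {w\<in>V4. E4 u w} \<union> V3" using E_4[OF u] VU by auto
    moreover have "{w\<in>V4. E4 u w} \<inter> V3 = {}" using d by blast
    ultimately show ?thesis unfolding degree_def using fin4 fin3 dg4[OF u] by (simp add: card_Un_disjoint)
  qed
  define MG where "MG = deformed_laplacian V E s"
  define N where "N = (\<lambda>x u w. (if u = w then x else (0::real)) - MG u w)"
  have Nf: "N x u w = (if u = w then x - 1 - s^2 * (real (degree V E u) - 1) else 0) + s * adj_matrix E u w" for x u w
    unfolding N_def MG_def deformed_laplacian_def by simp
  have dsum: "(\<Sum>w\<in>W. N x u w) = x - 1 - s^2 * (real (degree V E u) - 1) + s * real (card {w\<in>W. E u w})"
    if W: "finite W" "u \<in> W" for x u W
  proof -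
    have "(\<Sum>w\<in>W. N x u w) = (\<Sum>w\<in>W. (if u = w then x - 1 - s^2 * (real (degree V E u) - 1) else 0))
        + s * (\<Sum>w\<in>W. adj_matrix E u w)"
      unfolding Nf sum.distrib sum_distrib_left ..
    then show ?thesis using W by (simp add: sum_adj)
  qed
  have osum: "(\<Sum>w\<in>W. N x u w) = s * real (card {w\<in>W. E u w})"
    if W: "finite W" "u \<notin> W" for x u W
  proof -
    have "(\<Sum>w\<in>W. N x u w) = (\<Sum>w\<in>W. s * adj_matrix E u w)"
      by (rule sum.cong) (use W in \<open>auto simp: Nf\<close>)
    then show ?thesis using W by (simp add: sum_adj flip: sum_distrib_left)
  qed
  have rs1: "(\<Sum>w\<in>V1. N x u w) = x - a \<and> (\<Sum>w\<in>V2. N x u w) = s * n2 \<and> (\<Sum>w\<in>V3. N x u w) = 0 \<and> (\<Sum>w\<in>V4. N x u w) = 0" if u: "u \<in> V1" for x u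
  proof -
    have nu: "u \<notin> V2" "u \<notin> V3" "u \<notin> V4" using u d by blast+
    have e: "{w\<in>V1. E u w} = {w\<in>V1. E1 u w}" "{w\<in>V2. E u w} = V2" "{w\<in>V3. E u w} = {}" "{w\<in>V4. E u w} = {}" using E_1[OF u] d by auto
    have c: "card {w\<in>V1. E u w} = card {w\<in>V1. E1 u w}" "card {w\<in>V2. E u w} = card V2" "card {w\<in>V3. E u w} = 0" "card {w\<in>V4. E u w} = 0" by (simp_all only: e card.empty)
    show ?thesis using dsum[OF fin1 u, of x] osum[OF fin2 nu(1), of x] osum[OF fin3 nu(2), of x] osum[OF fin4 nu(3), of x] c deg1[OF u] dg1[OF u] by (simp add: adef n2 algebra_simps)
  qed
  have rs2: "(\<Sum>w\<in>V1. N x u w) = s * n1 \<and> (\<Sum>w\<in>V2. N x u w) = x - b \<and> (\<Sum>w\<in>V3. N x u w) = s * n2 \<and> (\<Sum>w\<in>V4. N x u w) = 0" if u: "u \<in> V2" for x u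
  proof -
    have nu: "u \<notin> V1" "u \<notin> V3" "u \<notin> V4" using u d by blast+
    have e: "{w\<in>V2. E u w} = {w\<in>V2. E2 u w}" "{w\<in>V1. E u w} = V1" "{w\<in>V3. E u w} = V3" "{w\<in>V4. E u w} = {}" using E_2[OF u] d by auto
    have c: "card {w\<in>V2. E u w} = card {w\<in>V2. E2 u w}" "card {w\<in>V1. E u w} = card V1" "card {w\<in>V3. E u w} = card V3" "card {w\<in>V4. E u w} = 0" by (simp_all only: e card.empty)
    show ?thesis using dsum[OF fin2 u, of x] osum[OF fin1 nu(1), of x] osum[OF fin3 nu(2), of x] osum[OF fin4 nu(3), of x] c deg2[OF u] dg2[OF u] card3 by (simp add: bdef n1 n2 algebra_simps)
  qed
  have rs3: "(\<Sum>w\<in>V1. N x u w) = 0 \<and> (\<Sum>w\<in>V2. N x u w) = s * n2 \<and> (\<Sum>w\<in>V3. N x u w) = x - b \<and> (\<Sum>w\<in>V4. N x u w) = s * n1" if u: "u \<in> V3" for x u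
  proof -
    have nu: "u \<notin> V1" "u \<notin> V2" "u \<notin> V4" using u d by blast+
    have e: "{w\<in>V3. E u w} = {w\<in>V3. E3 u w}" "{w\<in>V1. E u w} = {}" "{w\<in>V2. E u w} = V2" "{w\<in>V4. E u w} = V4" using E_3[OF u] d by auto
    have c: "card {w\<in>V3. E u w} = card {w\<in>V3. E3 u w}" "card {w\<in>V1. E u w} = 0" "card {w\<in>V2. E u w} = card V2" "card {w\<in>V4. E u w} = card V4" by (simp_all only: e card.empty)
    show ?thesis using dsum[OF fin3 u, of x] osum[OF fin1 nu(1), of x] osum[OF fin2 nu(2), of x] osum[OF fin4 nu(3), of x] c deg3[OF u] dg3[OF u] card4 by (simp add: bdef n1 n2 algebra_simps)
  qed
  have rs4: "(\<Sum>w\<in>V1. N x u w) = 0 \<and> (\<Sum>w\<in>V2. N x u w) = 0 \<and> (\<Sum>w\<in>V3. N x u w) = s * n2 \<and> (\<Sum>w\<in>V4. N x u w) = x - a" if u: "u \<in> V4" for x u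
  proof -
    have nu: "u \<notin> V1" "u \<notin> V2" "u \<notin> V3" using u d by blast+
    have e: "{w\<in>V4. E u w} = {w\<in>V4. E4 u w}" "{w\<in>V1. E u w} = {}" "{w\<in>V2. E u w} = {}" "{w\<in>V3. E u w} = V3" using E_4[OF u] d by auto
    have c: "card {w\<in>V4. E u w} = card {w\<in>V4. E4 u w}" "card {w\<in>V1. E u w} = 0" "card {w\<in>V2. E u w} = 0" "card {w\<in>V3. E u w} = card V3" by (simp_all only: e card.empty)
    show ?thesis using dsum[OF fin4 u, of x] osum[OF fin1 nu(1), of x] osum[OF fin2 nu(2), of x] osum[OF fin3 nu(3), of x] c deg4[OF u] dg4[OF u] card3 by (simp add: adef n1 n2 algebra_simps)
  qed
  obtain r1 where r1: "r1 \<in> V1" using ne1 by blast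
  obtain r2 where r2: "r2 \<in> V2" using ne2 by blast
  obtain r3 where r3: "r3 \<in> V3" using ne3 by blast
  obtain r4 where r4: "r4 \<in> V4" using ne4 by blast
  have rd: "r1 \<noteq> r2" "r1 \<noteq> r3" "r1 \<noteq> r4" "r2 \<noteq> r3" "r2 \<noteq> r4" "r3 \<noteq> r4"
    "r2 \<noteq> r1" "r3 \<noteq> r1" "r4 \<noteq> r1" "r3 \<noteq> r2" "r4 \<noteq> r2" "r4 \<noteq> r3"
    using r1 r2 r3 r4 d by blast+
  define c1 where "c1 = 1 + s^2 * (real d1 + n2 - 1)"
  define c2 where "c2 = 1 + s^2 * (real d2 + n1 + n2 - 1)"
  define Mloc where "Mloc = (\<lambda>c (F :: 'v \<Rightarrow> 'v \<Rightarrow> bool) u w. (if u = w then c else 0) - s * adj_matrix F u w)"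
  have loc1: "N x u w = (if u = w then x else 0) - Mloc c1 E1 u w" if u: "u \<in> V1" and w: "w \<in> V1" for x u w
  proof -
    have "E u w \<longleftrightarrow> E1 u w" using E_1[OF u] w d by blast
    then show ?thesis using deg1[OF u] by (cases "u = w") (simp_all add: Nf Mloc_def adj_matrix_def c1_def n2 algebra_simps)
  qed
  have loc2: "N x u w = (if u = w then x else 0) - Mloc c2 E2 u w" if u: "u \<in> V2" and w: "w \<in> V2" for x u w
  proof -
    have "E u w \<longleftrightarrow> E2 u w" using E_2[OF u] w d by blast
    then show ?thesis using deg2[OF u] card3 by (cases "u = w") (simp_all add: Nf Mloc_def adj_matrix_def c2_def n1 n2 algebra_simps)
  qed
  have loc3: "N x u w = (if u = w then x else 0) - Mloc c2 E3 u w" if u: "u \<in> V3" and w: "w \<in> V3" for x u w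
  proof -
    have "E u w \<longleftrightarrow> E3 u w" using E_3[OF u] w d by blast
    then show ?thesis using deg3[OF u] card4 by (cases "u = w") (simp_all add: Nf Mloc_def adj_matrix_def c2_def n1 n2 algebra_simps)
  qed
  have loc4: "N x u w = (if u = w then x else 0) - Mloc c1 E4 u w" if u: "u \<in> V4" and w: "w \<in> V4" for x u w
  proof -
    have "E u w \<longleftrightarrow> E4 u w" using E_4[OF u] w d by blast
    then show ?thesis using deg4[OF u] card3 by (cases "u = w") (simp_all add: Nf Mloc_def adj_matrix_def c1_def n2 algebra_simps)
  qed
  define D where "D = (\<lambda>x W r. det_on (W - {r}) (\<lambda>u w. N x u w - N x r w))"
  have P1: "ch V1 (Mloc c1 E1) x = (x - a) * D x V1 r1" for x
  proof -
    have "ch V1 (Mloc c1 E1) x = det_on V1 (N x)" unfolding ch_def by (rule det_on_cong) (simp add: loc1)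
    also have "\<dots> = (x - a) * D x V1 r1" unfolding D_def by (rule part_det[OF fin1 r1]) (use rs1 in blast)
    finally show ?thesis .
  qed
  have P2: "ch V2 (Mloc c2 E2) x = (x - b) * D x V2 r2" for x
  proof -
    have "ch V2 (Mloc c2 E2) x = det_on V2 (N x)" unfolding ch_def by (rule det_on_cong) (simp add: loc2)
    also have "\<dots> = (x - b) * D x V2 r2" unfolding D_def by (rule part_det[OF fin2 r2]) (use rs2 in blast)
    finally show ?thesis .
  qed
  have P3: "ch V3 (Mloc c2 E3) x = (x - b) * D x V3 r3" for x
  proof -
    have "ch V3 (Mloc c2 E3) x = det_on V3 (N x)" unfolding ch_def by (rule det_on_cong) (simp add: loc3)
    also have "\<dots> = (x - b) * D x V3 r3" unfolding D_def by (rule part_det[OF fin3 r3]) (use rs3 in blast)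
    finally show ?thesis .
  qed
  have P4: "ch V4 (Mloc c1 E4) x = (x - a) * D x V4 r4" for x
  proof -
    have "ch V4 (Mloc c1 E4) x = det_on V4 (N x)" unfolding ch_def by (rule det_on_cong) (simp add: loc4)
    also have "\<dots> = (x - a) * D x V4 r4" unfolding D_def by (rule part_det[OF fin4 r4]) (use rs4 in blast)
    finally show ?thesis .
  qed
  define R where "R = {r1, r2, r3, r4}"
  define \<rho> where "\<rho> = (\<lambda>v. if v \<in> V1 then r1 else if v \<in> V2 then r2 else if v \<in> V3 then r3 else r4)"
  have \<rho>1: "\<rho> v = r1" if "v \<in> V1" for v using that by (simp add: \<rho>_def)
  have \<rho>2: "\<rho> v = r2" if "v \<in> V2" for v using that d by (auto simp: \<rho>_def)
  have \<rho>3: "\<rho> v = r3" if "v \<in> V3" for v using that d by (auto simp: \<rho>_def)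
  have \<rho>4: "\<rho> v = r4" if "v \<in> V4" for v using that d by (auto simp: \<rho>_def)
  have pset1: "{w\<in>V. \<rho> w = r1} = V1" using \<rho>1 \<rho>2 \<rho>3 \<rho>4 rd VU by auto
  have pset2: "{w\<in>V. \<rho> w = r2} = V2" using \<rho>1 \<rho>2 \<rho>3 \<rho>4 rd VU by auto
  have pset3: "{w\<in>V. \<rho> w = r3} = V3" using \<rho>1 \<rho>2 \<rho>3 \<rho>4 rd VU by auto
  have pset4: "{w\<in>V. \<rho> w = r4} = V4" using \<rho>1 \<rho>2 \<rho>3 \<rho>4 rd VU by auto
  have RV: "R \<subseteq> V" using r1 r2 r3 r4 VU by (auto simp: R_def)
  define S where "S = (\<lambda>x u r. \<Sum>w\<in>{w\<in>V. \<rho> w = r}. N x u w)"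
  have whole: "det_on V (N x) = det_on R (S x) * det_on (V - R) (\<lambda>u w. N x u w - N x (\<rho> u) w)" for x
    unfolding S_def
  proof (rule det_on_equitable[OF finV RV])
    show "\<And>v. v \<in> V \<Longrightarrow> \<rho> v \<in> R" by (auto simp: R_def \<rho>_def)
    show "\<And>r. r \<in> R \<Longrightarrow> \<rho> r = r" using \<rho>1 \<rho>2 \<rho>3 \<rho>4 r1 r2 r3 r4 by (auto simp: R_def)
    fix u r assume u: "u \<in> V" and r: "r \<in> R"
    have "u \<in> V1 \<or> u \<in> V2 \<or> u \<in> V3 \<or> u \<in> V4" using u VU by auto
    moreover have "r = r1 \<or> r = r2 \<or> r = r3 \<or> r = r4" using r by (auto simp: R_def)
    ultimately show "(\<Sum>w\<in>{w\<in>V. \<rho> w = r}. N x u w) = (\<Sum>w\<in>{w\<in>V. \<rho> w = r}. N x (\<rho> u) w)"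
      using rs1[of u x] rs2[of u x] rs3[of u x] rs4[of u x]
        rs1[OF r1, of x] rs2[OF r2, of x] rs3[OF r3, of x] rs4[OF r4, of x]
        \<rho>1[of u] \<rho>2[of u] \<rho>3[of u] \<rho>4[of u] pset1 pset2 pset3 pset4
      by (elim disjE) simp_all
  qed
  have Sv: "S x r1 r1 = x - a" "S x r1 r2 = s * n2" "S x r1 r3 = 0" "S x r1 r4 = 0"
    "S x r2 r1 = s * n1" "S x r2 r2 = x - b" "S x r2 r3 = s * n2" "S x r2 r4 = 0"
    "S x r3 r1 = 0" "S x r3 r2 = s * n2" "S x r3 r3 = x - b" "S x r3 r4 = s * n1"
    "S x r4 r1 = 0" "S x r4 r2 = 0" "S x r4 r3 = s * n2" "S x r4 r4 = x - a" for x
    using rs1[OF r1, of x] rs2[OF r2, of x] rs3[OF r3, of x] rs4[OF r4, of x]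
    by (simp_all add: S_def pset1 pset2 pset3 pset4)
  define \<rho>2 where "\<rho>2 = (\<lambda>v. if v = r1 \<or> v = r4 then r1 else r2)"
  have ps1: "{w\<in>R. \<rho>2 w = r1} = {r1, r4}" using rd by (auto simp: R_def \<rho>2_def)
  have ps2: "{w\<in>R. \<rho>2 w = r2} = {r2, r3}" using rd by (auto simp: R_def \<rho>2_def)
  have finR: "finite R" by (simp add: R_def)
  have \<rho>2v: "\<rho>2 r1 = r1" "\<rho>2 r2 = r2" "\<rho>2 r3 = r2" "\<rho>2 r4 = r1" using rd by (auto simp: \<rho>2_def)
  have R12: "{r1, r2} \<subseteq> R" by (auto simp: R_def)
  have Rm: "R - {r1, r2} = {r3, r4}" using rd by (auto simp: R_def)
  define F where "F = (\<lambda>x. ((x - a) * (x - b + s * n2) - s * n2 * (s * n1))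
                          * ((x - b - s * n2) * (x - a) - s * n1 * (s * n2)))"
  have four: "det_on R (S x) = F x" for x
  proof -
    have "det_on R (S x) = det_on {r1, r2} (\<lambda>u r. \<Sum>w\<in>{w\<in>R. \<rho>2 w = r}. S x u w)
        * det_on (R - {r1, r2}) (\<lambda>u w. S x u w - S x (\<rho>2 u) w)"
    proof (rule det_on_equitable[OF finR R12])
      show "\<And>v. v \<in> R \<Longrightarrow> \<rho>2 v \<in> {r1, r2}" by (auto simp: \<rho>2_def)
      show "\<And>r. r \<in> {r1, r2} \<Longrightarrow> \<rho>2 r = r" using rd by (auto simp: \<rho>2_def)
      fix u r assume u: "u \<in> R" and r: "r \<in> {r1, r2}"
      have "u = r1 \<or> u = r2 \<or> u = r3 \<or> u = r4" using u by (auto simp: R_def)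
      moreover have "r = r1 \<or> r = r2" using r by auto
      ultimately show "(\<Sum>w\<in>{w\<in>R. \<rho>2 w = r}. S x u w) = (\<Sum>w\<in>{w\<in>R. \<rho>2 w = r}. S x (\<rho>2 u) w)"
        using rd by (elim disjE) (simp_all add: ps1 ps2 Sv \<rho>2v)
    qed
    also have "\<dots> = F x"
      unfolding Rm using rd by (simp add: det_on_two ps1 ps2 Sv \<rho>2v F_def)
    finally show ?thesis .
  qed
  define Df where "Df = (\<lambda>x u w. N x u w - N x (\<rho> u) w)"
  have offN: "N x u w = s * adj_matrix E u w" if "u \<noteq> w" for x u w using that by (simp add: Nf)
  have zero: "Df x u w = 0" if u: "u \<in> V" and w: "w \<in> V" and ne: "\<rho> u \<noteq> \<rho> w" for x u w
  proof -
    have "u \<in> V1 \<or> u \<in> V2 \<or> u \<in> V3 \<or> u \<in> V4" using u VU by auto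
    then show ?thesis
    proof (elim disjE)
      assume uu: "u \<in> V1"
      then have wn: "w \<notin> V1" using ne \<rho>1 by auto
      have "E u w \<longleftrightarrow> E r1 w" using E_1[OF uu] E_1[OF r1] wn by blast
      moreover have "u \<noteq> w" "r1 \<noteq> w" using uu r1 wn by auto
      ultimately show ?thesis using \<rho>1[OF uu] by (simp add: Df_def offN adj_matrix_def)
    next
      assume uu: "u \<in> V2"
      then have wn: "w \<notin> V2" using ne \<rho>2 by auto
      have "E u w \<longleftrightarrow> E r2 w" using E_2[OF uu] E_2[OF r2] wn by blast
      moreover have "u \<noteq> w" "r2 \<noteq> w" using uu r2 wn by auto
      ultimately show ?thesis using \<rho>2[OF uu] by (simp add: Df_def offN adj_matrix_def)
    next
      assume uu: "u \<in> V3"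
      then have wn: "w \<notin> V3" using ne \<rho>3 by auto
      have "E u w \<longleftrightarrow> E r3 w" using E_3[OF uu] E_3[OF r3] wn by blast
      moreover have "u \<noteq> w" "r3 \<noteq> w" using uu r3 wn by auto
      ultimately show ?thesis using \<rho>3[OF uu] by (simp add: Df_def offN adj_matrix_def)
    next
      assume uu: "u \<in> V4"
      then have wn: "w \<notin> V4" using ne \<rho>4 by auto
      have "E u w \<longleftrightarrow> E r4 w" using E_4[OF uu] E_4[OF r4] wn by blast
      moreover have "u \<noteq> w" "r4 \<noteq> w" using uu r4 wn by auto
      ultimately show ?thesis using \<rho>4[OF uu] by (simp add: Df_def offN adj_matrix_def)
    qed
  qed
  have \<rho>iff1: "\<rho> u = r1 \<longleftrightarrow> u \<in> V1" if "u \<in> V" for u using pset1 that by blast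
  have \<rho>iff2: "\<rho> u = r2 \<longleftrightarrow> u \<in> V2" if "u \<in> V" for u using pset2 that by blast
  have \<rho>iff3: "\<rho> u = r3 \<longleftrightarrow> u \<in> V3" if "u \<in> V" for u using pset3 that by blast
  have finX: "finite (V - R)" using finV by simp
  have bl1: "det_on (V - R) (Df x) = det_on (V1 - {r1}) (Df x) * det_on (V - R - (V1 - {r1})) (Df x)" for x
  proof (rule det_on_block[OF finX])
    show "V1 - {r1} \<subseteq> V - R" using VU d rd r1 r2 r3 r4 by (auto simp: R_def)
    fix u w assume u: "u \<in> V - R - (V1 - {r1})" and w: "w \<in> V1 - {r1}"
    have "u \<notin> V1" using u by (auto simp: R_def)
    then show "Df x u w = 0" using u w \<rho>iff1 VU by (intro zero) auto
  qed
  have bl2: "det_on (V - R - (V1 - {r1})) (Df x) = det_on (V2 - {r2}) (Df x)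
       * det_on (V - R - (V1 - {r1}) - (V2 - {r2})) (Df x)" for x
  proof (rule det_on_block)
    show "finite (V - R - (V1 - {r1}))" using finV by simp
    show "V2 - {r2} \<subseteq> V - R - (V1 - {r1})" using VU d rd r1 r2 r3 r4 by (auto simp: R_def)
    fix u w assume u: "u \<in> V - R - (V1 - {r1}) - (V2 - {r2})" and w: "w \<in> V2 - {r2}"
    have "u \<notin> V2" using u by (auto simp: R_def)
    then show "Df x u w = 0" using u w \<rho>iff2 VU by (intro zero) auto
  qed
  have bl3: "det_on (V - R - (V1 - {r1}) - (V2 - {r2})) (Df x) = det_on (V3 - {r3}) (Df x)
       * det_on (V - R - (V1 - {r1}) - (V2 - {r2}) - (V3 - {r3})) (Df x)" for x
  proof (rule det_on_block)
    show "finite (V - R - (V1 - {r1}) - (V2 - {r2}))" using finV by simp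
    show "V3 - {r3} \<subseteq> V - R - (V1 - {r1}) - (V2 - {r2})" using VU d rd r1 r2 r3 r4 by (auto simp: R_def)
    fix u w assume u: "u \<in> V - R - (V1 - {r1}) - (V2 - {r2}) - (V3 - {r3})" and w: "w \<in> V3 - {r3}"
    have "u \<notin> V3" using u by (auto simp: R_def)
    then show "Df x u w = 0" using u w \<rho>iff3 VU by (intro zero) auto
  qed
  have X4: "V - R - (V1 - {r1}) - (V2 - {r2}) - (V3 - {r3}) = V4 - {r4}"
    using VU d rd r1 r2 r3 by (auto simp: R_def)
  have cg1: "det_on (V1 - {r1}) (Df x) = D x V1 r1" for x
    unfolding D_def Df_def by (rule det_on_cong) (simp add: \<rho>1)
  have cg2: "det_on (V2 - {r2}) (Df x) = D x V2 r2" for x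
    unfolding D_def Df_def by (rule det_on_cong) (simp add: \<rho>2)
  have cg3: "det_on (V3 - {r3}) (Df x) = D x V3 r3" for x
    unfolding D_def Df_def by (rule det_on_cong) (simp add: \<rho>3)
  have cg4: "det_on (V4 - {r4}) (Df x) = D x V4 r4" for x
    unfolding D_def Df_def by (rule det_on_cong) (simp add: \<rho>4)
  have chG: "ch V MG x = F x * (D x V1 r1 * D x V2 r2 * D x V3 r3 * D x V4 r4)" for x
  proof -
    have "ch V MG x = det_on V (N x)" by (simp add: ch_def N_def)
    also have "\<dots> = F x * det_on (V - R) (Df x)" using whole[of x] four[of x] by (simp add: Df_def)
    also have "det_on (V - R) (Df x) = D x V1 r1 * D x V2 r2 * D x V3 r3 * D x V4 r4"
      using bl1[of x] bl2[of x] bl3[of x] X4 cg1[of x] cg2[of x] cg3[of x] cg4[of x] by simp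
    finally show ?thesis .
  qed
  have asym1: "\<And>i j. i \<in> V1 \<Longrightarrow> j \<in> V1 \<Longrightarrow> adj_matrix E1 i j = adj_matrix E1 j i" using sym1 by blast
  have asym2: "\<And>i j. i \<in> V2 \<Longrightarrow> j \<in> V2 \<Longrightarrow> adj_matrix E2 i j = adj_matrix E2 j i" using sym2 by blast
  have Q1: "ch V1 (Mloc c1 E1) x = (\<Prod>\<mu>\<in>#\<sigma>M1. x - \<mu>)" for x
  proof -
    have "ch V1 (Mloc c1 E1) x = (\<Prod>l\<in>#spec_on V1 (adj_matrix E1). x - (c1 - s * l))"
      unfolding Mloc_def by (rule ch_shift[OF fin1 asym1])
    also have "(\<lambda>l. x - (c1 - s * l)) = (\<lambda>\<mu>. x - \<mu>) \<circ> (\<lambda>l. s^2 * (real d1 + n2 - 1) - s * l + 1)"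
      by (rule ext) (simp add: c1_def)
    finally show ?thesis unfolding sM1 by (simp only: image_mset.compositionality)
  qed
  have Q2: "ch V2 (Mloc c2 E2) x = (\<Prod>\<mu>\<in>#\<sigma>M2. x - \<mu>)" for x
  proof -
    have "ch V2 (Mloc c2 E2) x = (\<Prod>l\<in>#spec_on V2 (adj_matrix E2). x - (c2 - s * l))"
      unfolding Mloc_def by (rule ch_shift[OF fin2 asym2])
    also have "(\<lambda>l. x - (c2 - s * l)) = (\<lambda>\<mu>. x - \<mu>) \<circ> (\<lambda>l. s^2 * (real d2 + n1 + n2 - 1) - s * l + 1)"
      by (rule ext) (simp add: c2_def)
    finally show ?thesis unfolding sM2 by (simp only: image_mset.compositionality)
  qed
  have Q3: "ch V3 (Mloc c2 E3) x = ch V2 (Mloc c2 E2) x" for x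
    unfolding Mloc_def by (rule iso_ch[OF copy3 fin2])
  have Q4: "ch V4 (Mloc c1 E4) x = ch V1 (Mloc c1 E1) x" for x
    unfolding Mloc_def by (rule iso_ch[OF copy4 fin1])
  have "(\<Prod>\<mu>\<in>#\<sigma>M1. a - \<mu>) = 0" using Q1[of a] P1[of a] by simp
  then have "a \<in># \<sigma>M1" by (auto simp: prod_mset_zero_iff)
  then obtain Y1 where Y1: "\<sigma>M1 = add_mset a Y1" by (metis multi_member_split)
  have "(\<Prod>\<mu>\<in>#\<sigma>M2. b - \<mu>) = 0" using Q2[of b] P2[of b] by simp
  then have "b \<in># \<sigma>M2" by (auto simp: prod_mset_zero_iff)
  then obtain Y2 where Y2: "\<sigma>M2 = add_mset b Y2" by (metis multi_member_split)
  define T where "T = ((\<sigma>M1 + \<sigma>M1) - {#a, a#}) + ((\<sigma>M2 + \<sigma>M2) - {#b, b#}) + \<sigma>F4"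
  have Tm: "T = Y1 + Y1 + Y2 + Y2 + \<sigma>F4" unfolding T_def Y1 Y2 by simp
  have n1p: "n1 \<ge> 0" and n2p: "n2 \<ge> 0" using n1 n2 by simp_all
  have D1p: "(a - b - s * n2)^2 + 4 * s^2 * n1 * n2 \<ge> 0" using n1p n2p by (simp add: add_nonneg_nonneg)
  have D2p: "(a - b + s * n2)^2 + 4 * s^2 * n1 * n2 \<ge> 0" using n1p n2p by (simp add: add_nonneg_nonneg)
  have FF: "F x = (\<Prod>l\<in>#\<sigma>F4. x - l)" for x
  proof -
    let ?A1 = "a + b + s * n2" and ?D1 = "(a - b - s * n2)^2 + 4 * s^2 * n1 * n2"
    let ?A2 = "a + b - s * n2" and ?D2 = "(a - b + s * n2)^2 + 4 * s^2 * n1 * n2"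
    have q1: "(x - (?A1 + sqrt ?D1) / 2) * (x - (?A1 - sqrt ?D1) / 2) = (x - b - s * n2) * (x - a) - s * n1 * (s * n2)"
      unfolding quad_roots[OF D1p] by (simp add: power2_eq_square field_simps)
    have q2: "(x - (?A2 + sqrt ?D2) / 2) * (x - (?A2 - sqrt ?D2) / 2) = (x - a) * (x - b + s * n2) - s * n2 * (s * n1)"
      unfolding quad_roots[OF D2p] by (simp add: power2_eq_square field_simps)
    have "(\<Prod>l\<in>#\<sigma>F4. x - l) = ((x - (?A1 + sqrt ?D1) / 2) * (x - (?A1 - sqrt ?D1) / 2))
        * ((x - (?A2 + sqrt ?D2) / 2) * (x - (?A2 - sqrt ?D2) / 2))"
      unfolding sF4 by (simp add: mult.assoc)
    also have "\<dots> = F x" unfolding q1 q2 F_def by (simp add: mult.commute)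
    finally show ?thesis by simp
  qed
  have key: "ch V MG x * ((x - a) * (x - a) * (x - b) * (x - b))
      = (\<Prod>l\<in>#T. x - l) * ((x - a) * (x - a) * (x - b) * (x - b))" for x
  proof -
    let ?y1 = "\<Prod>l\<in>#Y1. x - l" and ?y2 = "\<Prod>l\<in>#Y2. x - l"
    have h1: "(x - a) * D x V1 r1 = (x - a) * ?y1"
    proof -
      have "(x - a) * D x V1 r1 = ch V1 (Mloc c1 E1) x" using P1[of x] by simp
      also have "\<dots> = (x - a) * ?y1" using Q1[of x] by (simp add: Y1)
      finally show ?thesis .
    qed
    have h2: "(x - b) * D x V2 r2 = (x - b) * ?y2"
    proof -
      have "(x - b) * D x V2 r2 = ch V2 (Mloc c2 E2) x" using P2[of x] by simp
      also have "\<dots> = (x - b) * ?y2" using Q2[of x] by (simp add: Y2)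
      finally show ?thesis .
    qed
    have h3: "(x - b) * D x V3 r3 = (x - b) * ?y2"
    proof -
      have "(x - b) * D x V3 r3 = ch V3 (Mloc c2 E3) x" using P3[of x] by simp
      also have "\<dots> = ch V2 (Mloc c2 E2) x" by (rule Q3)
      also have "\<dots> = (x - b) * D x V2 r2" by (rule P2)
      finally show ?thesis using h2 by simp
    qed
    have h4: "(x - a) * D x V4 r4 = (x - a) * ?y1"
    proof -
      have "(x - a) * D x V4 r4 = ch V4 (Mloc c1 E4) x" using P4[of x] by simp
      also have "\<dots> = ch V1 (Mloc c1 E1) x" by (rule Q4)
      also have "\<dots> = (x - a) * D x V1 r1" by (rule P1)
      finally show ?thesis using h1 by simp
    qed
    have "ch V MG x * ((x - a) * (x - a) * (x - b) * (x - b))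
        = F x * (((x - a) * D x V1 r1) * ((x - b) * D x V2 r2) * ((x - b) * D x V3 r3) * ((x - a) * D x V4 r4))"
      unfolding chG by (simp only: ac_simps)
    also have "\<dots> = F x * (((x - a) * ?y1) * ((x - b) * ?y2) * ((x - b) * ?y2) * ((x - a) * ?y1))"
      unfolding h1 h2 h3 h4 ..
    also have "\<dots> = (\<Prod>l\<in>#T. x - l) * ((x - a) * (x - a) * (x - b) * (x - b))"
      unfolding Tm FF by (simp add: ac_simps)
    finally show ?thesis .
  qed
  have lin: "\<And>(l::real) y. poly [:-l, 1:] y = y - l" by simp
  define q where "q = [:-a, 1:] * [:-a, 1:] * [:-b, 1:] * [:-b, 1:]"
  have "poly (charpoly_on V MG * q) = poly ((\<Prod>l\<in>#T. [:-l, 1:]) * q)"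
  proof
    fix x show "poly (charpoly_on V MG * q) x = poly ((\<Prod>l\<in>#T. [:-l, 1:]) * q) x"
      unfolding q_def by (simp only: poly_mult poly_prod_mset lin poly_charpoly_on key)
  qed
  then have "charpoly_on V MG * q = (\<Prod>l\<in>#T. [:-l, 1:]) * q" by (simp only: poly_eq_poly_eq_iff)
  moreover have "q \<noteq> 0" unfolding q_def by simp
  ultimately have "charpoly_on V MG = (\<Prod>l\<in>#T. [:-l, 1:])" by simp
  then have "spec_on V MG = T" by (rule spec_on_eq)
  then show ?thesis unfolding MG_def T_def .
qed


theorem mainTheorem12:
  fixes V1 V2 V3 V4 :: "'v set"
    and E1 E2 E3 E4 :: "'v \<Rightarrow> 'v \<Rightarrow> bool"
    and d1 d2 :: nat and s :: real
  assumes g1: "simple_graph V1 E1" and g2: "simple_graph V2 E2"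
    and g3: "simple_graph V3 E3" and g4: "simple_graph V4 E4"
    and ne1: "V1 \<noteq> {}" and ne2: "V2 \<noteq> {}"
    and reg1: "regular V1 E1 d1" and reg2: "regular V2 E2 d2"
    and copy3: "graph_iso V2 E2 V3 E3" and copy4: "graph_iso V1 E1 V4 E4"
    and disj: "V1 \<inter> V2 = {}" "V1 \<inter> V3 = {}" "V1 \<inter> V4 = {}"
      "V2 \<inter> V3 = {}" "V2 \<inter> V4 = {}" "V3 \<inter> V4 = {}"
  shows
    "let Gs = (\<lambda>i::nat. if i = 1 then (V1, E1) else if i = 2 then (V2, E2)
                         else if i = 3 then (V3, E3) else (V4, E4));
         V = hjoin_V 4 Gs; E = hjoin_E 4 P4 Gs;
         n1 = real (card V1); n2 = real (card V2);
         a = s^2 * (real d1 + n2 - 1) - s * real d1 + 1;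
         b = s^2 * (real d2 + (n1 + n2) - 1) - s * real d2 + 1;
         \<sigma>M1 = image_mset (\<lambda>l. s^2 * (real d1 + n2 - 1) - s * l + 1)
                  (spec_on V1 (adj_matrix E1));
         \<sigma>M2 = image_mset (\<lambda>l. s^2 * (real d2 + n1 + n2 - 1) - s * l + 1)
                  (spec_on V2 (adj_matrix E2));
         \<sigma>F4 = {# (a + b + s * n2 + sqrt ((a - b - s * n2)^2 + 4 * s^2 * n1 * n2)) / 2,
                  (a + b + s * n2 - sqrt ((a - b - s * n2)^2 + 4 * s^2 * n1 * n2)) / 2,
                  (a + b - s * n2 + sqrt ((a - b + s * n2)^2 + 4 * s^2 * n1 * n2)) / 2,
                  (a + b - s * n2 - sqrt ((a - b + s * n2)^2 + 4 * s^2 * n1 * n2)) / 2 #}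
     in spec_on V (deformed_laplacian V E s)
          = ((\<sigma>M1 + \<sigma>M1) - {#a, a#}) + ((\<sigma>M2 + \<sigma>M2) - {#b, b#}) + \<sigma>F4"
  unfolding Let_def
  by (rule main_core[OF g1 g2 g3 g4 ne1 ne2 reg1 reg2 copy3 copy4 disj]) (rule refl)+

end
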